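(* Let $p\geq 1$ and $0\leq k<p$ be integers and let $\sigma=\mathrm{ReLU}^p$. For each $N\geq 1$, let $w_1,\dots,w_N\in\{1,-1\}$ and let $\mathbf{b}=(b_1,\dots,b_N)\in\mathbb{R}^N$ be quasi-evenly spaced on $[-1,1]$, i.e. $b_n=-1+2(n-1)/N+o(N^{-1})$ for $n=1,\dots,N$ (uniformly in $n$ as $N\to\infty$). Let $\mathbf{G}^{(k)}_\sigma\in\mathbb{R}^{N\times N}$ be the matrix with entries $$[\mathbf{G}^{(k)}_\sigma]_{i,j}=\int_{-1}^1 w_i^k w_j^k\,\sigma^{(k)}(w_ix-b_i)\,\sigma^{(k)}(w_jx-b_j)\,dx,\qquad i,j=1,\dots,N,$$ with eigenvalues $\lambda^{(k)}_1\geq\cdots\geq\lambda^{(k)}_N\geq 0$, and let $\kappa(\mathbf{G}^{(k)}_\sigma)=\lambda^{(k)}_1/\lambda^{(k)}_N$. Then $\kappa(\mathbf{G}^{(k)}_\sigma)=\Omega(N^{1+2(p-k)})$ as $N\to\infty$; that is, there exists a constant $C>0$ such that $\kappa(\mathbf{G}^{(k)}_\sigma)\geq C N^{1+2(p-k)}$ for all sufficiently large $N$.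
   Context: $\mathrm{ReLU}^p(z)=(\max\{0,z\})^p$ and $\sigma^{(k)}$ denotes the $k$-th derivative of $\sigma$ (so $\sigma^{(k)}(z)=\frac{p!}{(p-k)!}\mathrm{ReLU}^{p-k}(z)$ for $k<p$). *)

theory Defs
  imports "HOL-Analysis.Analysis" "Jordan_Normal_Form.Char_Poly"
begin

definition relu_pow :: "nat \<Rightarrow> real \<Rightarrow> real" where
  "relu_pow p z = (max 0 z) ^ p"

definition relu_pow_deriv :: "nat \<Rightarrow> nat \<Rightarrow> real \<Rightarrow> real" where
  "relu_pow_deriv p k = (deriv ^^ k) (relu_pow p)"

text \<open>Gram matrix G^(k)_sigma for the N-neuron network; weights w N n and biases b N n
  are indexed by n = 1..N; matrix rows/columns are 0-indexed (row i is neuron i+1).\<close>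
definition gram_matrix ::
  "nat \<Rightarrow> nat \<Rightarrow> (nat \<Rightarrow> nat \<Rightarrow> real) \<Rightarrow> (nat \<Rightarrow> nat \<Rightarrow> real) \<Rightarrow> nat \<Rightarrow> real mat" where
  "gram_matrix p k w b N = Matrix.mat N N (\<lambda>(i, j).
     integral {-1..1} (\<lambda>x. (w N (i+1)) ^ k * (w N (j+1)) ^ k
        * relu_pow_deriv p k (w N (i+1) * x - b N (i+1))
        * relu_pow_deriv p k (w N (j+1) * x - b N (j+1))))"

text \<open>Largest and smallest eigenvalue (the matrices considered are real symmetric).\<close>
definition lambda_max :: "real mat \<Rightarrow> real" where
  "lambda_max A = Max {a. eigenvalue A a}"

definition lambda_min :: "real mat \<Rightarrow> real" where
  "lambda_min A = Min {a. eigenvalue A a}"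

definition quasi_evenly_spaced :: "(nat \<Rightarrow> nat \<Rightarrow> real) \<Rightarrow> bool" where
  "quasi_evenly_spaced b \<longleftrightarrow>
     (\<forall>\<epsilon>>0. \<exists>N0. \<forall>N\<ge>N0. \<forall>n\<in>{1..N}.
        \<bar>b N n - (-1 + 2 * (real n - 1) / real N)\<bar> \<le> \<epsilon> / real N)"

end

theory Submission
  imports Defs
begin


definition qf :: "real mat \<Rightarrow> nat \<Rightarrow> (nat \<Rightarrow> real) \<Rightarrow> real" where
  "qf A n x = (\<Sum>i<n. \<Sum>j<n. A$$(i,j) * x i * x j)"

definition nsq :: "nat \<Rightarrow> (nat \<Rightarrow> real) \<Rightarrow> real" where
  "nsq n x = (\<Sum>i<n. (x i)^2)"

lemma coord_cont [continuous_intros]: "continuous_on S (\<lambda>x::nat\<Rightarrow>real. x i)"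
  by (rule continuous_on_subset[OF continuous_on_product_coordinates]) auto

lemma qf_add:
  assumes sym: "\<And>i j. i<n \<Longrightarrow> j<n \<Longrightarrow> A$$(i,j) = A$$(j,i)"
  shows "qf A n (\<lambda>i. x i + t * y i) = qf A n x + 2*t*(\<Sum>i<n. y i * (\<Sum>j<n. A$$(i,j) * x j)) + t^2 * qf A n y"
proof -
  have e1: "(\<Sum>i<n. \<Sum>j<n. A$$(i,j) * x i * y j) = (\<Sum>i<n. \<Sum>j<n. A$$(i,j) * y i * x j)"
    by (subst sum.swap) (auto intro!: sum.cong simp: sym mult_ac)
  have e2: "(\<Sum>i<n. \<Sum>j<n. A$$(i,j) * y i * x j) = (\<Sum>i<n. y i * (\<Sum>j<n. A$$(i,j) * x j))"
    by (simp add: sum_distrib_left mult_ac)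
  have "qf A n (\<lambda>i. x i + t * y i) = (\<Sum>i<n. \<Sum>j<n. A$$(i,j) * x i * x j + t * (A$$(i,j) * x i * y j)
      + t * (A$$(i,j) * y i * x j) + t^2 * (A$$(i,j) * y i * y j))"
    unfolding qf_def by (intro sum.cong refl) (simp add: algebra_simps power2_eq_square)
  also have "\<dots> = qf A n x + t * (\<Sum>i<n. \<Sum>j<n. A$$(i,j) * x i * y j) + t * (\<Sum>i<n. \<Sum>j<n. A$$(i,j) * y i * x j)
      + t^2 * qf A n y"
    unfolding qf_def by (simp only: sum.distrib sum_distrib_left)
  finally show ?thesis unfolding e1 e2 by simp
qed

lemma nsq_add: "nsq n (\<lambda>i. x i + t * y i) = nsq n x + 2*t*(\<Sum>i<n. x i * y i) + t^2 * nsq n y"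
  unfolding nsq_def by (simp add: power2_eq_square algebra_simps sum.distrib sum_distrib_left)

lemma qf_scale: "qf A n (\<lambda>i. c * x i) = c^2 * qf A n x"
  unfolding qf_def by (simp add: sum_distrib_left power2_eq_square mult_ac)

lemma nsq_scale: "nsq n (\<lambda>i. c * x i) = c^2 * nsq n x"
  unfolding nsq_def by (simp add: sum_distrib_left power_mult_distrib)

lemma qf_cong: "(\<And>i. i<n \<Longrightarrow> x i = y i) \<Longrightarrow> qf A n x = qf A n y"
  unfolding qf_def by (intro sum.cong) auto

lemma nsq_cong: "(\<And>i. i<n \<Longrightarrow> x i = y i) \<Longrightarrow> nsq n x = nsq n y"
  unfolding nsq_def by (intro sum.cong) auto

lemma nsq_nonneg: "nsq n x \<ge> 0" unfolding nsq_def by (simp add: sum_nonneg)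

lemma nsq_zero: "nsq n x = 0 \<Longrightarrow> i < n \<Longrightarrow> x i = 0"
  unfolding nsq_def by (subst (asm) sum_nonneg_eq_0_iff) auto



lemma sym_eig_max:
  assumes A: "A \<in> carrier_mat n n" and n: "0 < n"
    and sym: "\<And>i j. i<n \<Longrightarrow> j<n \<Longrightarrow> A$$(i,j) = A$$(j,i)"
  shows "\<exists>\<mu>. eigenvalue A \<mu> \<and> (\<forall>x. qf A n x \<le> \<mu> * nsq n x)"
proof -
  define K where "K = PiE UNIV (\<lambda>i::nat. if i < n then {-1..1::real} else {0}) \<inter> {x. nsq n x = 1}"
  have "compactin (product_topology (\<lambda>i. euclidean) UNIV) (PiE UNIV (\<lambda>i::nat. if i < n then {-1..1::real} else {0}))"
    by (subst compactin_PiE) auto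
  then have c1: "compact (PiE UNIV (\<lambda>i::nat. if i < n then {-1..1::real} else {0}))"
    by (simp add: euclidean_product_topology)
  have contn: "continuous_on UNIV (nsq n)" unfolding nsq_def by (intro continuous_intros)
  have "closed {x. nsq n x = 1}"
    by (rule closed_Collect_eq[OF contn]) (intro continuous_intros)
  with c1 have cK: "compact K" unfolding K_def by blast
  define e0 where "e0 = (\<lambda>i::nat. if i = 0 then 1 else (0::real))"
  have "nsq n e0 = (\<Sum>i<n. if i = 0 then 1 else 0)" unfolding nsq_def
    by (rule sum.cong) (auto simp: e0_def)
  then have "nsq n e0 = 1" using n by simp
  then have "e0 \<in> K" unfolding K_def e0_def using n by auto
  then have Kne: "K \<noteq> {}" by auto
  have contq: "continuous_on K (qf A n)" unfolding qf_def by (intro continuous_intros)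
  obtain x0 where x0: "x0 \<in> K" and x0max: "\<And>y. y \<in> K \<Longrightarrow> qf A n y \<le> qf A n x0"
    using continuous_attains_sup[OF cK Kne contq] by blast
  define \<mu> where "\<mu> = qf A n x0"
  have nx0: "nsq n x0 = 1" using x0 unfolding K_def by auto
  have claim1: "qf A n y \<le> \<mu> * nsq n y" for y
  proof (cases "nsq n y = 0")
    case True
    then have "qf A n y = qf A n (\<lambda>_. 0)" by (intro qf_cong) (auto dest: nsq_zero)
    then show ?thesis using True by (simp add: qf_def)
  next
    case False
    then have pos: "nsq n y > 0" using nsq_nonneg[of n y] by linarith
    define s where "s = sqrt (nsq n y)"
    have s: "s > 0" "s^2 = nsq n y" using pos unfolding s_def by auto
    define z where "z = (\<lambda>i. if i < n then (1/s) * y i else 0)"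
    have nz: "nsq n z = 1"
    proof -
      have "nsq n z = nsq n (\<lambda>i. (1/s) * y i)" by (rule nsq_cong) (simp add: z_def)
      also have "\<dots> = 1" unfolding nsq_scale using s pos by (simp add: power_divide)
      finally show ?thesis .
    qed
    have "z i \<in> {-1..1}" if "i < n" for i
    proof -
      have "(z i)^2 \<le> nsq n z" unfolding nsq_def
        by (rule member_le_sum) (use that in auto)
      then have "(z i)^2 \<le> 1^2" using nz by simp
      then have "\<bar>z i\<bar> \<le> \<bar>1\<bar>" using abs_le_square_iff by blast
      then show ?thesis by auto
    qed
    then have "z \<in> K" unfolding K_def using nz by (auto simp: z_def)
    then have "qf A n z \<le> \<mu>" using x0max \<mu>_def by auto
    moreover have "qf A n z = qf A n y / s^2"
    proof -
      have "qf A n z = qf A n (\<lambda>i. (1/s) * y i)" by (rule qf_cong) (simp add: z_def)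
      also have "\<dots> = qf A n y / s^2" unfolding qf_scale by (simp add: power_divide)
      finally show ?thesis .
    qed
    ultimately have "qf A n y / s^2 \<le> \<mu>" by simp
    then have "qf A n y \<le> \<mu> * s^2" using s(1) by (simp add: divide_le_eq)
    then show ?thesis using s by simp
  qed
  define r where "r = (\<lambda>i. (\<Sum>j<n. A$$(i,j) * x0 j) - \<mu> * x0 i)"
  define a where "a = nsq n r"
  define b where "b = \<mu> * nsq n r - qf A n r"
  have b0: "b \<ge> 0" using claim1[of r] unfolding b_def by simp
  have ineq: "2 * t * a \<le> t^2 * b" for t
  proof -
    have "qf A n (\<lambda>i. x0 i + t * r i) \<le> \<mu> * nsq n (\<lambda>i. x0 i + t * r i)" by (rule claim1)
    then have "\<mu> + 2*t*(\<Sum>i<n. r i * (\<Sum>j<n. A$$(i,j) * x0 j)) + t^2 * qf A n r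
       \<le> \<mu> * (1 + 2*t*(\<Sum>i<n. x0 i * r i) + t^2 * nsq n r)"
      using qf_add[of n A x0 t r, OF sym] nsq_add[of n x0 t r] nx0 unfolding \<mu>_def by simp
    moreover have "(\<Sum>i<n. r i * (\<Sum>j<n. A$$(i,j) * x0 j)) - \<mu> * (\<Sum>i<n. x0 i * r i) = a"
      unfolding a_def nsq_def r_def
      by (simp add: sum_distrib_left sum_subtractf[symmetric] power2_eq_square algebra_simps)
    ultimately show ?thesis unfolding b_def by (simp add: algebra_simps)
  qed
  have a0: "a = 0"
  proof -
    have c: "b + 1 > 0" using b0 by simp
    have "(2 * (a/(b+1)) * a) * (b+1)^2 \<le> ((a/(b+1))^2 * b) * (b+1)^2"
      by (rule mult_right_mono[OF ineq]) simp
    moreover have "(2 * (a/(b+1)) * a) * (b+1)^2 = 2*a^2*(b+1)" using c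
      by (simp add: power2_eq_square field_simps)
    moreover have "((a/d)^2 * b) * d^2 = a^2*b" if "d \<noteq> 0" for d :: real
      using that by (simp add: power2_eq_square field_simps)
    then have "((a/(b+1))^2 * b) * (b+1)^2 = a^2*b" using c by simp
    ultimately have "2 * a^2 * (b+1) \<le> a^2 * b" by simp
    then have "a^2 * (b + 2) \<le> 0" by (simp add: algebra_simps)
    then have "a^2 \<le> 0" using b0 by (simp add: mult_le_0_iff)
    then show ?thesis by simp
  qed
  have r0: "r i = 0" if "i < n" for i using nsq_zero[of n r i] a0 that unfolding a_def by simp
  define v where "v = vec n x0"
  have dimA: "dim_row A = n" "dim_col A = n" using A by auto
  have "eigenvector A v \<mu>"
    unfolding eigenvector_def dimA
  proof (intro conjI)
    show "v \<in> carrier_vec n" unfolding v_def by simp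
    show "v \<noteq> 0\<^sub>v n"
    proof
      assume "v = 0\<^sub>v n"
      then have "x0 i = 0" if "i < n" for i using that
        by (metis index_vec index_zero_vec(1) v_def)
      then have "nsq n x0 = 0" unfolding nsq_def by simp
      then show False using nx0 by simp
    qed
    show "A *\<^sub>v v = \<mu> \<cdot>\<^sub>v v"
    proof (rule eq_vecI)
      fix i assume i: "i < dim_vec (\<mu> \<cdot>\<^sub>v v)"
      then have i': "i < n" unfolding v_def by simp
      have "(A *\<^sub>v v) $ i = (\<Sum>j<n. A$$(i,j) * x0 j)"
        using i' dimA unfolding v_def
        by (simp add: scalar_prod_def lessThan_atLeast0)
      also have "\<dots> = \<mu> * x0 i" using r0[OF i'] unfolding r_def by simp
      finally show "(A *\<^sub>v v) $ i = (\<mu> \<cdot>\<^sub>v v) $ i" using i' unfolding v_def by simp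
    qed (simp add: v_def dimA)
  qed
  then show ?thesis using claim1 unfolding eigenvalue_def by blast
qed



lemma eig_finite: assumes A: "(A::real mat) \<in> carrier_mat n n"
  shows "finite {a. eigenvalue A a}"
proof -
  have "char_poly A \<noteq> 0" using degree_monic_char_poly[OF A] by auto
  then have "finite {a. poly (char_poly A) a = 0}" by (rule poly_roots_finite)
  moreover have "{a. eigenvalue A a} = {a. poly (char_poly A) a = 0}"
    using eigenvalue_root_char_poly[OF A] by auto
  ultimately show ?thesis by simp
qed

lemma eig_neg: assumes A: "(A::real mat) \<in> carrier_mat n n" and e: "eigenvalue (-A) m"
  shows "eigenvalue A (-m)"
proof -
  obtain v where v: "eigenvector (-A) v m" using e unfolding eigenvalue_def by blast
  have dims: "dim_row (-A) = n" "dim_row A = n" "dim_col A = n" using A by auto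
  have vc: "v \<in> carrier_vec n" and v0: "v \<noteq> 0\<^sub>v n" and Av: "(-A) *\<^sub>v v = m \<cdot>\<^sub>v v"
    using v unfolding eigenvector_def dims by auto
  have "A *\<^sub>v v = (-m) \<cdot>\<^sub>v v"
  proof (rule eq_vecI)
    fix i assume "i < dim_vec ((-m) \<cdot>\<^sub>v v)"
    then have i: "i < n" using vc by simp
    have "((-A) *\<^sub>v v) $ i = (m \<cdot>\<^sub>v v) $ i" using Av by simp
    then have "- ((A *\<^sub>v v) $ i) = m * v $ i" using i vc dims
      by (simp add: scalar_prod_def sum_negf[symmetric])
    then show "(A *\<^sub>v v) $ i = ((-m) \<cdot>\<^sub>v v) $ i" using i vc by simp
  qed (use dims vc in simp)
  then show ?thesis unfolding eigenvalue_def eigenvector_def using dims vc v0 by auto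
qed

lemma lam_bounds:
  assumes A: "A \<in> carrier_mat n n" and n: "0 < n"
    and sym: "\<And>i j. i<n \<Longrightarrow> j<n \<Longrightarrow> A$$(i,j) = A$$(j,i)"
  shows "qf A n x \<le> lambda_max A * nsq n x" "lambda_min A * nsq n x \<le> qf A n x"
proof -
  obtain \<mu> where e: "eigenvalue A \<mu>" and b: "\<forall>x. qf A n x \<le> \<mu> * nsq n x"
    using sym_eig_max[OF A n sym] by blast
  have "\<mu> \<le> lambda_max A" unfolding lambda_max_def
    using e eig_finite[OF A] by (intro Max_ge) auto
  then show "qf A n x \<le> lambda_max A * nsq n x"
    using b[rule_format, of x] nsq_nonneg[of n x] by (meson mult_right_mono order_trans)
  have A': "-A \<in> carrier_mat n n" using A by simp
  have sym': "(-A)$$(i,j) = (-A)$$(j,i)" if "i<n" "j<n" for i j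
    using sym[OF that] that A by simp
  obtain \<nu> where e': "eigenvalue (-A) \<nu>" and b': "\<forall>x. qf (-A) n x \<le> \<nu> * nsq n x"
    using sym_eig_max[OF A' n sym'] by blast
  have "qf (-A) n x = - qf A n x" using A unfolding qf_def by (simp add: sum_negf[symmetric])
  then have b2: "-\<nu> * nsq n x \<le> qf A n x" using b'[rule_format, of x] by simp
  have "lambda_min A \<le> -\<nu>" unfolding lambda_min_def
    using eig_neg[OF A e'] eig_finite[OF A] by (intro Min_le) auto
  then show "lambda_min A * nsq n x \<le> qf A n x"
    using b2 nsq_nonneg[of n x] by (meson mult_right_mono order_trans)
qed



lemma relu_has_deriv:
  assumes n: "2 \<le> n"
  shows "((\<lambda>z. max 0 z ^ n) has_real_derivative (real n * max 0 z ^ (n-1))) (at z)"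
proof (cases z "0::real" rule: linorder_cases)
  case less
  have "((\<lambda>_. 0::real) has_real_derivative 0) (at z)" by simp
  then have der: "((\<lambda>z. max 0 z ^ n) has_real_derivative 0) (at z)"
    by (rule has_field_derivative_transform_within_open[of _ _ _ "{..<0}"]) (use less n in auto)
  have eq: "real n * max 0 z ^ (n-1) = 0" using less n by simp
  show ?thesis unfolding eq using der .
next
  case greater
  have "((\<lambda>z. z ^ n) has_real_derivative (real n * z ^ (n - Suc 0))) (at z)" by (rule DERIV_pow)
  then have "((\<lambda>z. max 0 z ^ n) has_real_derivative (real n * z ^ (n - Suc 0))) (at z)"
    by (rule has_field_derivative_transform_within_open[of _ _ _ "{0<..}"]) (use greater in auto)
  then show ?thesis using greater by simp
next
  case equal
  have lim: "((\<lambda>h. \<bar>h\<bar> ^ (n-1)) \<longlongrightarrow> 0) (at (0::real))"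
  proof -
    have "((\<lambda>h. \<bar>h\<bar> ^ (n-1)) \<longlongrightarrow> \<bar>0::real\<bar> ^ (n-1)) (at (0::real))"
      by (intro tendsto_intros)
    moreover have "\<bar>0::real\<bar> ^ (n-1) = 0" using n by simp
    ultimately show ?thesis by metis
  qed
  have bnd: "norm ((max 0 (0 + h) ^ n - max 0 0 ^ n) / h) \<le> \<bar>h\<bar> ^ (n-1)" for h :: real
  proof (cases "h = 0")
    case True then show ?thesis by simp
  next
    case False
    obtain q where q: "n = Suc q" using n by (cases n) auto
    have "norm ((max 0 (0 + h) ^ n - max 0 0 ^ n) / h) = \<bar>max 0 h\<bar> ^ n / \<bar>h\<bar>"
      using n by (simp add: abs_divide power_abs)
    also have "\<dots> \<le> \<bar>h\<bar> ^ n / \<bar>h\<bar>"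
      by (intro divide_right_mono power_mono) auto
    also have "\<dots> = \<bar>h\<bar> ^ (n-1)" using False q by simp
    finally show ?thesis .
  qed
  have "((\<lambda>h. (max 0 (0 + h) ^ n - max 0 0 ^ n) / h) \<longlongrightarrow> 0) (at (0::real))"
    by (rule Lim_null_comparison[OF _ lim]) (use bnd in auto)
  then have "((\<lambda>z. max 0 z ^ n) has_real_derivative 0) (at 0)"
    unfolding DERIV_def by simp
  moreover obtain q where "n - 1 = Suc q" using n by (intro that[of "n - 2"]) arith
  ultimately show ?thesis using equal by simp
qed

lemma relu_deriv_iter:
  assumes "j < p"
  shows "(deriv ^^ j) (relu_pow p) = (\<lambda>z. fact p / fact (p - j) * max 0 z ^ (p - j))"
  using assms
proof (induction j)
  case 0
  show ?case by (simp add: relu_pow_def fun_eq_iff)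
next
  case (Suc j)
  then have IH: "(deriv ^^ j) (relu_pow p) = (\<lambda>z. fact p / fact (p - j) * max 0 z ^ (p - j))" by simp
  obtain q where q: "p - j = Suc q" "q = p - Suc j" "1 \<le> q" using Suc.prems by (intro that) auto
  have "(deriv ^^ Suc j) (relu_pow p) = deriv (\<lambda>z. fact p / fact (p - j) * max 0 z ^ (p - j))"
    using IH by simp
  also have "\<dots> = (\<lambda>z. fact p / fact (p - j) * (real (p - j) * max 0 z ^ (p - j - 1)))"
  proof
    fix z :: real
    show "deriv (\<lambda>z. fact p / fact (p - j) * max 0 z ^ (p - j)) z =
        fact p / fact (p - j) * (real (p - j) * max 0 z ^ (p - j - 1))"
      by (intro DERIV_imp_deriv DERIV_cmult relu_has_deriv) (use q in simp)
  qed
  also have "\<dots> = (\<lambda>z. fact p / fact (p - Suc j) * max 0 z ^ (p - Suc j))"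
  proof
    fix z :: real
    have "fact p / fact (p - j) * real (p - j) = (fact p / fact q :: real)"
      using q by (simp add: fact_Suc field_simps del: of_nat_Suc)
    then show "fact p / fact (p - j) * (real (p - j) * max 0 z ^ (p - j - 1)) =
        fact p / fact (p - Suc j) * max 0 z ^ (p - Suc j)"
      using q by (metis (no_types, lifting) diff_Suc_1 mult.assoc)
  qed
  finally show ?case .
qed

lemma relu_pow_deriv_eq:
  assumes "k < p"
  shows "relu_pow_deriv p k = (\<lambda>z. fact p / fact (p - k) * max 0 z ^ (p - k))"
  unfolding relu_pow_deriv_def using relu_deriv_iter[OF assms] .

lemma qf_integral:
  fixes a b :: real and f :: "nat \<Rightarrow> real \<Rightarrow> real" and x :: "nat \<Rightarrow> real"
  assumes "\<And>i. i<n \<Longrightarrow> continuous_on {a..b} (f i)"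
  shows "(\<Sum>i<n. \<Sum>j<n. integral {a..b} (\<lambda>t. f i t * f j t) * x i * x j)
        = integral {a..b} (\<lambda>t. (\<Sum>i<n. x i * f i t)^2)"
proof -
  have int: "(\<lambda>t. x i * f i t * (x j * f j t)) integrable_on {a..b}" if "i<n" "j<n" for i j
    by (intro integrable_continuous_interval continuous_intros) (auto intro: assms that)
  have int2: "(\<lambda>t. \<Sum>j<n. x i * f i t * (x j * f j t)) integrable_on {a..b}" if "i<n" for i
    by (intro integrable_continuous_interval continuous_intros) (auto intro: assms that)
  have "integral {a..b} (\<lambda>t. (\<Sum>i<n. x i * f i t)^2)
      = integral {a..b} (\<lambda>t. \<Sum>i<n. \<Sum>j<n. x i * f i t * (x j * f j t))"
    by (simp add: power2_eq_square sum_product)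
  also have "\<dots> = (\<Sum>i<n. integral {a..b} (\<lambda>t. \<Sum>j<n. x i * f i t * (x j * f j t)))"
    by (rule integral_sum) (use int2 in auto)
  also have "\<dots> = (\<Sum>i<n. \<Sum>j<n. integral {a..b} (\<lambda>t. x i * f i t * (x j * f j t)))"
    by (intro sum.cong refl integral_sum) (use int in auto)
  also have "\<dots> = (\<Sum>i<n. \<Sum>j<n. integral {a..b} (\<lambda>t. f i t * f j t) * x i * x j)"
  proof (intro sum.cong refl)
    fix i j
    have "(\<lambda>t. x i * f i t * (x j * f j t)) = (\<lambda>t. (x i * x j) * (f i t * f j t))"
      by (simp add: fun_eq_iff mult_ac)
    then show "integral {a..b} (\<lambda>t. x i * f i t * (x j * f j t)) = integral {a..b} (\<lambda>t. f i t * f j t) * x i * x j"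
      by (simp add: mult_ac)
  qed
  finally show ?thesis ..
qed

lemma trunc_bound:
  fixes \<beta> v :: "nat \<Rightarrow> real"
  assumes m: "0 < m" and bnds: "\<And>a. a < n \<Longrightarrow> lo \<le> \<beta> a \<and> \<beta> a \<le> hi"
    and mom: "\<And>r. r \<le> m \<Longrightarrow> (\<Sum>a<n. v a * \<beta> a ^ r) = 0"
  shows "\<bar>\<Sum>a<n. v a * max 0 (y - \<beta> a) ^ m\<bar> \<le>
     (if lo \<le> y \<and> y \<le> hi then (\<Sum>a<n. \<bar>v a\<bar>) * (hi - lo) ^ m else 0)"
proof (cases "y < lo")
  case True
  have "(\<Sum>a<n. v a * max 0 (y - \<beta> a) ^ m) = 0"
  proof (intro sum.neutral ballI)
    fix a assume "a \<in> {..<n}"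
    then have "y - \<beta> a < 0" using bnds[of a] True by auto
    then show "v a * max 0 (y - \<beta> a) ^ m = 0" using m by simp
  qed
  then show ?thesis by simp
next
  case nlo: False
  show ?thesis
  proof (cases "y > hi")
    case True
    have "(\<Sum>a<n. v a * max 0 (y - \<beta> a) ^ m) = (\<Sum>a<n. v a * (-\<beta> a + y) ^ m)"
    proof (intro sum.cong refl)
      fix a assume "a \<in> {..<n}"
      then have "y - \<beta> a \<ge> 0" using bnds[of a] True by auto
      then show "v a * max 0 (y - \<beta> a) ^ m = v a * (-\<beta> a + y) ^ m" by simp
    qed
    also have "\<dots> = (\<Sum>a<n. \<Sum>r\<le>m. (of_nat (m choose r) * (-1)^r * y^(m-r)) * (v a * \<beta> a ^ r))"
    proof (intro sum.cong refl)
      fix a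
      have bin: "(-\<beta> a + y)^m = (\<Sum>r\<le>m. of_nat (m choose r) * (-\<beta> a)^r * y^(m-r))" by (rule binomial_ring)
      show "v a * (-\<beta> a + y)^m = (\<Sum>r\<le>m. (of_nat (m choose r) * (-1)^r * y^(m-r)) * (v a * \<beta> a ^ r))"
        unfolding bin sum_distrib_left by (intro sum.cong refl) (simp add: power_minus[of "\<beta> a"] ac_simps)
    qed
    also have "\<dots> = (\<Sum>r\<le>m. (of_nat (m choose r) * (-1)^r * y^(m-r)) * (\<Sum>a<n. v a * \<beta> a ^ r))"
      by (subst sum.swap) (simp add: sum_distrib_left)
    also have "\<dots> = 0" using mom by simp
    finally show ?thesis by simp
  next
    case False
    have "\<bar>\<Sum>a<n. v a * max 0 (y - \<beta> a) ^ m\<bar> \<le> (\<Sum>a<n. \<bar>v a * max 0 (y - \<beta> a) ^ m\<bar>)"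
      by (rule sum_abs)
    also have "\<dots> \<le> (\<Sum>a<n. \<bar>v a\<bar> * (hi - lo) ^ m)"
    proof (intro sum_mono)
      fix a assume "a \<in> {..<n}"
      then have "0 \<le> max 0 (y - \<beta> a)" "max 0 (y - \<beta> a) \<le> hi - lo"
        using bnds[of a] False nlo by auto
      then have "max 0 (y - \<beta> a) ^ m \<le> (hi - lo) ^ m" by (intro power_mono) auto
      then show "\<bar>v a * max 0 (y - \<beta> a) ^ m\<bar> \<le> \<bar>v a\<bar> * (hi - lo) ^ m"
        by (simp add: abs_mult mult_left_mono)
    qed
    also have "\<dots> = (\<Sum>a<n. \<bar>v a\<bar>) * (hi - lo) ^ m" by (simp add: sum_distrib_right)
    finally show ?thesis using False nlo by simp
  qed
qed

lemma ind_int: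
  fixes a b c :: real
  assumes "0 \<le> c" "a \<le> b"
  shows "(\<lambda>t. if a \<le> t \<and> t \<le> b then c else 0) integrable_on {-1..1}"
    "integral {-1..1} (\<lambda>t. if a \<le> t \<and> t \<le> b then c else 0) \<le> c * (b - a)"
proof -
  have eq: "(\<lambda>t. if a \<le> t \<and> t \<le> b then c else 0) = (\<lambda>t. if t \<in> {a..b} then (\<lambda>_. c) t else 0)"
    by auto
  have I: "{a..b} \<inter> {-1..1} = {max a (-1)..min b 1}" by auto
  show "(\<lambda>t. if a \<le> t \<and> t \<le> b then c else 0) integrable_on {-1..1}"
    unfolding eq integrable_restrict_Int I by (rule integrable_continuous_interval) simp
  have "integral {-1..1} (\<lambda>t. if a \<le> t \<and> t \<le> b then c else 0) = (if max a (-1) \<le> min b 1 then min b 1 - max a (-1) else 0) * c"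
    unfolding eq integral_restrict_Int I by simp
  also have "\<dots> \<le> (b - a) * c" using assms by (intro mult_right_mono) auto
  finally show "integral {-1..1} (\<lambda>t. if a \<le> t \<and> t \<le> b then c else 0) \<le> c * (b - a)"
    by (simp add: mult.commute)
qed



lemma big_entry_aux:
  fixes s \<beta> K lo' :: real
  assumes s: "s = 1 \<or> s = -1" and \<beta>: "\<beta> \<le> -1/2" and K: "K > 0"
    and sub: "{lo'..lo'+1} \<subseteq> {-1..1}" and pos: "\<And>t. t \<in> {lo'..lo'+1} \<Longrightarrow> s * t \<ge> 0"
  shows "K^2 * (1/2)^(2*m) \<le> integral {-1..1} (\<lambda>t. (s^k * (K * max 0 (s*t - \<beta>)^m)) * (s^k * (K * max 0 (s*t - \<beta>)^m)))"
proof -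
  define g where "g = (\<lambda>t. (s^k * (K * max 0 (s*t - \<beta>)^m)) * (s^k * (K * max 0 (s*t - \<beta>)^m)))"
  have ss: "s^k * s^k = 1" using s by (auto simp: power_mult_distrib[symmetric])
  have g_eq: "g t = K^2 * max 0 (s*t - \<beta>)^(2*m)" for t
  proof -
    have "g t = (s^k * s^k) * K^2 * (max 0 (s*t - \<beta>)^m)^2"
      unfolding g_def by (simp add: power2_eq_square mult_ac)
    then show ?thesis using ss by (simp add: power_mult[symmetric] mult.commute)
  qed
  have cont: "continuous_on S g" for S unfolding g_def by (intro continuous_intros)
  have g0: "g t \<ge> 0" for t unfolding g_def by simp
  have "integral {lo'..lo'+1} (\<lambda>_. K^2 * (1/2)^(2*m)) \<le> integral {lo'..lo'+1} g"
  proof (rule integral_le)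
    show "(\<lambda>_. K^2 * (1/2)^(2*m)) integrable_on {lo'..lo'+1}" by (rule integrable_continuous_interval) simp
    show "g integrable_on {lo'..lo'+1}" by (rule integrable_continuous_interval[OF cont])
    fix t assume t: "t \<in> {lo'..lo'+1}"
    have "1/2 \<le> max 0 (s*t - \<beta>)" using pos[OF t] \<beta> by auto
    then have "(1/2)^(2*m) \<le> max 0 (s*t - \<beta>)^(2*m)" by (rule power_mono) simp
    then show "K^2 * (1/2)^(2*m) \<le> g t" unfolding g_eq using K by simp
  qed
  also have "\<dots> \<le> integral {-1..1} g"
    by (rule integral_subset_le[OF sub]) (auto intro: integrable_continuous_interval cont g0)
  finally show ?thesis unfolding g_def by simp
qed

lemma big_entry:
  fixes s \<beta> K :: real
  assumes s: "s = 1 \<or> s = -1" and \<beta>: "\<beta> \<le> -1/2" and K: "K > 0"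
  shows "K^2 * (1/2)^(2*m) \<le> integral {-1..1} (\<lambda>t. (s^k * (K * max 0 (s*t - \<beta>)^m)) * (s^k * (K * max 0 (s*t - \<beta>)^m)))"
  using s
proof
  assume "s = 1"
  then show ?thesis using big_entry_aux[OF s \<beta> K, of 0] by auto
next
  assume s1: "s = -1"
  show ?thesis by (rule big_entry_aux[OF s \<beta> K, of "-1"]) (use s1 in auto)
qed



lemma small_vec:
  fixes s \<beta> :: "nat \<Rightarrow> real" and K lo hi :: real
  assumes m: "0 < m" and N: "2*m+3 \<le> N"
    and s: "\<And>i. i < 2*m+3 \<Longrightarrow> s i = 1 \<or> s i = -1"
    and bnd: "\<And>i. i < 2*m+3 \<Longrightarrow> lo \<le> \<beta> i \<and> \<beta> i \<le> hi"
    and K: "K \<ge> 0"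
  shows "\<exists>x. nsq N x > 0 \<and>
    integral {-1..1} (\<lambda>t. (\<Sum>i<N. x i * (s i ^ k * (K * max 0 (s i * t - \<beta> i) ^ m)))^2)
      \<le> K^2 * (real m + 2)^2 * (hi - lo)^(2*m+1) * nsq N x"
proof -
  define S0 where "S0 = {..<2*m+3}"
  define P where "P = {i\<in>S0. s i = 1}"
  define Q where "Q = {i\<in>S0. s i = -1}"
  have PQ: "P \<union> Q = S0" "P \<inter> Q = {}" using s unfolding P_def Q_def S0_def by auto
  have "card P + card Q = 2*m+3"
    using card_Un_disjoint[of P Q] PQ unfolding S0_def P_def Q_def by auto
  then have "m+2 \<le> card P \<or> m+2 \<le> card Q" by arith
  then obtain \<sigma> T where \<sigma>: "\<sigma> = 1 \<or> \<sigma> = -1" and T: "T \<subseteq> S0" "card T = m+2" "finite T"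
      and Ts: "\<And>i. i \<in> T \<Longrightarrow> s i = \<sigma>"
  proof
    assume "m+2 \<le> card P"
    then obtain T where "T \<subseteq> P" "card T = m+2" "finite T" by (rule obtain_subset_with_card_n)
    then show ?thesis using that[of 1 T] unfolding P_def by auto
  next
    assume "m+2 \<le> card Q"
    then obtain T where "T \<subseteq> Q" "card T = m+2" "finite T" by (rule obtain_subset_with_card_n)
    then show ?thesis using that[of "-1" T] unfolding Q_def by auto
  qed
  obtain f where bij: "bij_betw f {0..<m+2} T" using ex_bij_betw_nat_finite[OF T(3)] T(2) by auto
  have fT: "f a \<in> T" if "a < m+2" for a using bij that by (auto simp: bij_betw_def)
  have TN: "T \<subseteq> {..<N}" using T(1) N unfolding S0_def by auto
  have fb: "lo \<le> \<beta> (f a) \<and> \<beta> (f a) \<le> hi" if "a < m+2" for a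
    using bnd fT[OF that] T(1) unfolding S0_def by auto
  have lohi: "lo \<le> hi" using fb[of 0] by auto
  define c where "c = (\<lambda>r. vec (m+2) (\<lambda>a. \<beta> (f a) ^ r))"
  define Mx where "Mx = mat\<^sub>r (m+2) (m+2) (\<lambda>r. if r = m+1 then 0\<^sub>v (m+2) else c r)"
  have detM: "det Mx = 0" unfolding Mx_def
    by (rule det_row_0) (auto simp: c_def)
  have Mc: "Mx \<in> carrier_mat (m+2) (m+2)" unfolding Mx_def by simp
  obtain v where v: "v \<in> carrier_vec (m+2)" "v \<noteq> 0\<^sub>v (m+2)" "Mx *\<^sub>v v = 0\<^sub>v (m+2)"
    using det_0_iff_vec_prod_zero[OF Mc] detM by blast
  have mom: "(\<Sum>a<m+2. v$a * \<beta> (f a) ^ r) = 0" if r: "r \<le> m" for r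
  proof -
    have "(Mx *\<^sub>v v) $ r = 0" using v(3) r by simp
    moreover have "(Mx *\<^sub>v v) $ r = (\<Sum>a<m+2. \<beta> (f a) ^ r * v$a)"
      using r v(1) unfolding Mx_def c_def
      by (simp add: scalar_prod_def lessThan_atLeast0)
    ultimately show ?thesis by (simp add: mult.commute)
  qed
  define x where "x = (\<lambda>i. if i \<in> T then v $ (inv_into {0..<m+2} f i) else 0)"
  have xf: "x (f a) = v $ a" if "a < m+2" for a
    using fT[OF that] bij_betw_inv_into_left[OF bij, of a] that unfolding x_def by auto
  have reidx: "(\<Sum>i<N. x i * g i) = (\<Sum>a<m+2. v$a * g (f a))" for g :: "nat \<Rightarrow> real"
  proof -
    have "(\<Sum>i<N. x i * g i) = (\<Sum>i\<in>T. x i * g i)"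
      by (rule sum.mono_neutral_right) (use TN in \<open>auto simp: x_def\<close>)
    also have "\<dots> = (\<Sum>a\<in>{0..<m+2}. x (f a) * g (f a))"
      by (rule sum.reindex_bij_betw[OF bij, symmetric])
    also have "\<dots> = (\<Sum>a<m+2. v$a * g (f a))"
      by (simp add: lessThan_atLeast0 xf)
    finally show ?thesis .
  qed
  define ns where "ns = (\<Sum>a<m+2. v$a * v$a)"
  have nsq_eq: "nsq N x = ns" unfolding nsq_def ns_def
    using reidx[of x] by (simp add: power2_eq_square xf)
  obtain a0 where a0: "a0 < m+2" "v$a0 \<noteq> 0"
    using v(1,2) by (metis carrier_vecD eq_vecI index_zero_vec(1) index_zero_vec(2))
  have "v$a0 * v$a0 \<le> ns" unfolding ns_def
    by (rule member_le_sum) (use a0 in auto)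
  moreover have "v$a0 * v$a0 > 0" using a0(2) by (metis not_real_square_gt_zero)
  ultimately have nspos: "ns > 0" by linarith
  define V where "V = (\<Sum>a<m+2. \<bar>v$a\<bar>)"
  define L where "L = hi - lo"
  have L0: "L \<ge> 0" using lohi unfolding L_def by simp
  have V0: "V \<ge> 0" unfolding V_def by (simp add: sum_nonneg)
  have Vb: "V^2 \<le> (real m + 2)^2 * ns"
  proof -
    have "\<bar>v$a\<bar> \<le> sqrt ns" if "a < m+2" for a
    proof -
      have "v$a * v$a \<le> ns" unfolding ns_def by (rule member_le_sum) (use that in auto)
      then have "\<bar>v$a\<bar>^2 \<le> ns" by (simp add: power2_eq_square)
      then show ?thesis by (rule real_le_rsqrt)
    qed
    then have "V \<le> (\<Sum>a<m+2. sqrt ns)" unfolding V_def by (intro sum_mono) auto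
    also have "\<dots> = (real m + 2) * sqrt ns" by simp
    finally have "V^2 \<le> ((real m + 2) * sqrt ns)^2" using V0 by (intro power_mono) auto
    also have "\<dots> = (real m + 2)^2 * ns" using nspos by (simp add: power_mult_distrib)
    finally show ?thesis .
  qed
  define F where "F = (\<lambda>t. (\<Sum>i<N. x i * (s i ^ k * (K * max 0 (s i * t - \<beta> i) ^ m))))"
  define E where "E = (\<lambda>t::real. if lo \<le> \<sigma> * t \<and> \<sigma> * t \<le> hi then K^2 * V^2 * L^(2*m) else 0)"
  have Fb: "(F t)^2 \<le> E t" for t
  proof -
    have "F t = (\<Sum>a<m+2. v$a * (s (f a) ^ k * (K * max 0 (s (f a) * t - \<beta> (f a)) ^ m)))"
      unfolding F_def by (rule reidx)
    also have "\<dots> = (\<Sum>a<m+2. \<sigma>^k * K * (v$a * max 0 (\<sigma> * t - \<beta> (f a)) ^ m))"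
      by (rule sum.cong) (auto simp: Ts fT mult_ac)
    also have "\<dots> = \<sigma>^k * K * (\<Sum>a<m+2. v$a * max 0 (\<sigma> * t - \<beta> (f a)) ^ m)"
      by (rule sum_distrib_left[symmetric])
    finally have Ft: "\<bar>F t\<bar> = K * \<bar>\<Sum>a<m+2. v$a * max 0 (\<sigma> * t - \<beta> (f a)) ^ m\<bar>"
      using \<sigma> K by (auto simp: abs_mult power_abs)
    have tb: "\<bar>\<Sum>a<m+2. v$a * max 0 (\<sigma> * t - \<beta> (f a)) ^ m\<bar> \<le>
       (if lo \<le> \<sigma> * t \<and> \<sigma> * t \<le> hi then V * L ^ m else 0)"
      unfolding V_def L_def
      by (rule trunc_bound[OF m]) (use fb mom in auto)
    have "\<bar>F t\<bar> \<le> K * (if lo \<le> \<sigma> * t \<and> \<sigma> * t \<le> hi then V * L ^ m else 0)"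
      unfolding Ft by (rule mult_left_mono[OF tb K])
    then have "\<bar>F t\<bar>^2 \<le> (K * (if lo \<le> \<sigma> * t \<and> \<sigma> * t \<le> hi then V * L ^ m else 0))^2"
      by (intro power_mono) auto
    then show ?thesis unfolding E_def
      by (auto simp: power_mult_distrib power_mult[symmetric] mult_ac)
  qed
  have Fc: "continuous_on {-1..1} (\<lambda>t. (F t)^2)" unfolding F_def by (intro continuous_intros)
  obtain a' b' where ab: "E = (\<lambda>t. if a' \<le> t \<and> t \<le> b' then K^2 * V^2 * L^(2*m) else 0)" "b' - a' = L" "a' \<le> b'"
  proof (cases "\<sigma> = 1")
    case True
    then show ?thesis using that[of lo hi] lohi unfolding E_def L_def by auto
  next
    case False
    then have "\<sigma> = -1" using \<sigma> by auto
    then show ?thesis using that[of "-hi" "-lo"] lohi unfolding E_def L_def by (auto simp: fun_eq_iff)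
  qed
  have cE: "K^2 * V^2 * L^(2*m) \<ge> 0" using L0 by simp
  have "integral {-1..1} (\<lambda>t. (F t)^2) \<le> integral {-1..1} E"
    by (rule integral_le) (use Fc Fb ind_int(1)[OF cE ab(3)] ab(1) in \<open>auto intro: integrable_continuous_interval\<close>)
  also have "\<dots> \<le> K^2 * V^2 * L^(2*m) * L" using ind_int(2)[OF cE ab(3)] ab by simp
  also have "\<dots> \<le> K^2 * ((real m + 2)^2 * ns) * L^(2*m) * L"
    using Vb L0 by (intro mult_right_mono mult_left_mono) auto
  also have "\<dots> = K^2 * (real m + 2)^2 * (hi - lo)^(2*m+1) * nsq N x"
    unfolding nsq_eq L_def by (simp add: mult_ac)
  finally show ?thesis using nspos nsq_eq unfolding F_def by auto
qed



theorem theorem2: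
  fixes p k :: nat and w b :: "nat \<Rightarrow> nat \<Rightarrow> real"
  assumes "1 \<le> p" and "k < p"
    and "\<forall>N\<ge>1. \<forall>n\<in>{1..N}. w N n \<in> {1, -1}"
    and "quasi_evenly_spaced b"
  shows "\<exists>C>0. \<forall>\<^sub>F N in sequentially.
           lambda_max (gram_matrix p k w b N)
             \<ge> C * real N ^ (1 + 2 * (p - k)) * lambda_min (gram_matrix p k w b N)"
proof -
  define m where "m = p - k"
  have m: "0 < m" using assms(2) unfolding m_def by simp
  define K :: real where "K = fact p / fact m"
  have K: "K > 0" unfolding K_def by simp
  have rpd: "relu_pow_deriv p k = (\<lambda>z. K * max 0 z ^ m)"
    unfolding K_def m_def by (rule relu_pow_deriv_eq[OF assms(2)])
  obtain N0 where N0: "\<And>N n. N \<ge> N0 \<Longrightarrow> n \<in> {1..N} \<Longrightarrow>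
      \<bar>b N n - (-1 + 2 * (real n - 1) / real N)\<bar> \<le> 1 / real N"
  proof -
    have ex: "\<forall>\<epsilon>>0. \<exists>N0. \<forall>N\<ge>N0. \<forall>n\<in>{1..N}.
        \<bar>b N n - (-1 + 2 * (real n - 1) / real N)\<bar> \<le> \<epsilon> / real N"
      using assms(4) unfolding quasi_evenly_spaced_def .
    obtain N0 where "\<forall>N\<ge>N0. \<forall>n\<in>{1..N}.
        \<bar>b N n - (-1 + 2 * (real n - 1) / real N)\<bar> \<le> 1 / real N"
      using ex[rule_format, of 1] by auto
    then show ?thesis using that by blast
  qed
  define c0 where "c0 = K^2 * (1/2)^(2*m)"
  define B where "B = K^2 * (real m + 2)^2 * (4 * real m + 6)^(2*m+1)"
  define C where "C = c0 / B"
  have c0: "c0 > 0" unfolding c0_def using K by simp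
  have B: "B > 0" unfolding B_def using K by simp
  have C: "C > 0" unfolding C_def using c0 B by simp
  have main: "lambda_max (gram_matrix p k w b N) \<ge> C * real N ^ (1 + 2 * (p - k)) * lambda_min (gram_matrix p k w b N)"
    if NN0: "N \<ge> N0" and Nm: "N \<ge> 2*m+3" for N
  proof -
    have N1: "N \<ge> 1" "real N \<ge> 2" using Nm by auto
    have Npos: "real N > 0" using N1 by simp
    define \<phi> where "\<phi> = (\<lambda>i t. w N (i+1) ^ k * (K * max 0 (w N (i+1) * t - b N (i+1)) ^ m))"
    define A where "A = gram_matrix p k w b N"
    have Ac: "A \<in> carrier_mat N N" unfolding A_def gram_matrix_def by simp
    have Aij: "A$$(i,j) = integral {-1..1} (\<lambda>t. \<phi> i t * \<phi> j t)" if "i < N" "j < N" for i j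
      unfolding A_def gram_matrix_def using that
      by (simp add: rpd \<phi>_def mult_ac)
    have sym: "A$$(i,j) = A$$(j,i)" if "i < N" "j < N" for i j
      using Aij[OF that] Aij[OF that(2,1)] by (simp add: mult.commute)
    have contphi: "continuous_on {-1..1} (\<phi> i)" for i unfolding \<phi>_def by (intro continuous_intros)
    have qfA: "qf A N x = integral {-1..1} (\<lambda>t. (\<Sum>i<N. x i * \<phi> i t)^2)" for x
    proof -
      have "qf A N x = (\<Sum>i<N. \<Sum>j<N. integral {-1..1} (\<lambda>t. \<phi> i t * \<phi> j t) * x i * x j)"
        unfolding qf_def by (intro sum.cong refl) (simp add: Aij)
      also have "\<dots> = integral {-1..1} (\<lambda>t. (\<Sum>i<N. x i * \<phi> i t)^2)"
        by (rule qf_integral) (rule contphi)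
      finally show ?thesis .
    qed
    have Npos': "0 < N" using N1 by simp
    note lb = lam_bounds[OF Ac Npos' sym]
    define e0 where "e0 = (\<lambda>i::nat. if i = 0 then 1 else (0::real))"
    have ne0: "nsq N e0 = 1"
    proof -
      have "nsq N e0 = (\<Sum>i<N. if i = 0 then 1 else 0)" unfolding nsq_def
        by (rule sum.cong) (auto simp: e0_def)
      then show ?thesis using Npos' by simp
    qed
    have se0: "(\<Sum>i<N. e0 i * \<phi> i t) = \<phi> 0 t" for t
    proof -
      have "(\<Sum>i<N. e0 i * \<phi> i t) = (\<Sum>i<N. if i = 0 then \<phi> i t else 0)"
        by (rule sum.cong) (auto simp: e0_def)
      then show ?thesis using Npos' by simp
    qed
    have w1: "w N 1 = 1 \<or> w N 1 = -1" using assms(3) N1 by auto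
    have b1: "b N 1 \<le> -1/2"
    proof -
      have "\<bar>b N 1 - (-1 + 2 * (real 1 - 1) / real N)\<bar> \<le> 1 / real N" using N0[OF NN0, of 1] N1 by simp
      then have "b N 1 \<le> -1 + 1 / real N" by simp
      moreover have "1 / real N \<le> 1/2" using N1 by (simp add: field_simps)
      ultimately show ?thesis by simp
    qed
    have "c0 \<le> integral {-1..1} (\<lambda>t. \<phi> 0 t * \<phi> 0 t)"
      unfolding c0_def \<phi>_def using big_entry[OF w1 b1 K, of m k] by simp
    also have "\<dots> = qf A N e0" unfolding qfA se0 by (simp add: power2_eq_square)
    also have "\<dots> \<le> lambda_max A" using lb(1)[of e0] ne0 by simp
    finally have lmax: "c0 \<le> lambda_max A" .
    define lo where "lo = -1 - 1 / real N"
    define hi where "hi = -1 + (4 * real m + 5) / real N"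
    have bnd: "lo \<le> b N (i+1) \<and> b N (i+1) \<le> hi" if "i < 2*m+3" for i
    proof -
      have "\<bar>b N (i+1) - (-1 + 2 * (real (i+1) - 1) / real N)\<bar> \<le> 1 / real N"
        using N0[OF NN0, of "i+1"] that Nm by simp
      then have h: "-1 + 2 * real i / real N - 1 / real N \<le> b N (i+1)"
          "b N (i+1) \<le> -1 + 2 * real i / real N + 1 / real N" by (auto simp: abs_le_iff)
      have "2 * real i \<le> 4 * real m + 4" using that by simp
      then have "2 * real i / real N \<le> (4 * real m + 4) / real N" using Npos by (simp add: divide_right_mono)
      moreover have "0 \<le> 2 * real i / real N" using Npos by simp
      moreover have "(4 * real m + 4) / real N + 1 / real N = (4 * real m + 5) / real N"
        by (simp add: add_divide_distrib[symmetric])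
      ultimately show ?thesis using h unfolding lo_def hi_def by linarith
    qed
    have ws: "w N (i+1) = 1 \<or> w N (i+1) = -1" if "i < 2*m+3" for i
      using assms(3) N1 that Nm by auto
    obtain x where xpos: "nsq N x > 0" and xint:
      "integral {-1..1} (\<lambda>t. (\<Sum>i<N. x i * (w N (i+1) ^ k * (K * max 0 (w N (i+1) * t - b N (i+1)) ^ m)))^2)
        \<le> K^2 * (real m + 2)^2 * (hi - lo)^(2*m+1) * nsq N x"
      using small_vec[where s="\<lambda>i. w N (i+1)" and \<beta>="\<lambda>i. b N (i+1)" and lo=lo and hi=hi and K=K and k=k, OF m Nm] ws bnd K by auto
    have hl: "(hi - lo)^(2*m+1) = (4 * real m + 6)^(2*m+1) / real N ^ (2*m+1)"
    proof -
      have "hi - lo = (4 * real m + 6) / real N" unfolding hi_def lo_def using Npos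
        by (simp add: field_simps)
      then show ?thesis by (simp add: power_divide)
    qed
    have "lambda_min A * nsq N x \<le> qf A N x" by (rule lb(2))
    also have "\<dots> \<le> B / real N ^ (2*m+1) * nsq N x"
      using xint unfolding qfA \<phi>_def hl B_def by (simp add: mult_ac)
    finally have "lambda_min A * nsq N x \<le> (B / real N ^ (2*m+1)) * nsq N x" .
    then have "lambda_min A \<le> B / real N ^ (2*m+1)" using xpos by (rule mult_right_le_imp_le)
    then have "C * real N ^ (2*m+1) * lambda_min A \<le> C * real N ^ (2*m+1) * (B / real N ^ (2*m+1))"
      using C Npos by (intro mult_left_mono) auto
    also have "\<dots> = c0" unfolding C_def using B Npos by simp
    finally have "C * real N ^ (2*m+1) * lambda_min A \<le> lambda_max A" using lmax by simp
    moreover have "1 + 2 * (p - k) = 2*m+1" unfolding m_def by simp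
    ultimately show ?thesis unfolding A_def by simp
  qed
  show ?thesis
    by (rule exI[of _ C], rule conjI[OF C], rule eventually_sequentiallyI[of "max N0 (2*m+3)"])
       (rule main; simp)
qed


end
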